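(* In the model described in the context, assume $n_i\ge 2$ for all $i$. The estimator $A_1=\frac{1}{\sum_{i=1}^a(n_i-1)n_i}\sum_{i=1}^a\sum_{1\le\ell_1<\ell_2\le n_i}(\boldsymbol X_{i,\ell_1}-\boldsymbol X_{i,\ell_2})^\top\boldsymbol T_S(\boldsymbol X_{i,\ell_1}-\boldsymbol X_{i,\ell_2})$ satisfies $E(A_1)=\operatorname{tr}(\boldsymbol T_S\boldsymbol\Sigma)$ (under the null hypothesis and under alternatives), and in each of the asymptotic frameworks (I)–(V) it is ratio consistent: $A_1/\operatorname{tr}(\boldsymbol T_S\boldsymbol\Sigma)\to1$ in probability.
   Context: Model: there are $a$ independent groups; for $i=1,\dots,a$ and $j=1,\dots,n_i$ the observations $\boldsymbol X_{i,j}\in\mathbb R^d$ are independent with $\boldsymbol X_{i,j}\sim\mathcal N_d(\boldsymbol\mu_i,\boldsymbol\Sigma)$, where $\boldsymbol\Sigma$ is a common positive definite $d\times d$ matrix. $N=\sum_i n_i$, $n_{\max}=\max_i n_i$. $\boldsymbol T_S$ is a nonzero $d\times d$ symmetric idempotent matrix. Asymptotic frameworks: all of $a,d,n_1,\dots,n_a,\boldsymbol\Sigma,\boldsymbol\mu_i,\boldsymbol T_S$ may depend on an index along which $N\to\infty$, and one of the following holds (quantities not listed stay bounded): (I) $a\to\infty$; (II) $a,d\to\infty$; (III) $a,n_{\max}\to\infty$; (IV) $d,n_{\max}\to\infty$; (V) $a,d,n_{\max}\to\infty$. *)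

theory Defs
  imports "HOL-Probability.Probability"
begin

text \<open>Vectors in R^d are functions nat => real (only indices k < d matter);
d x d matrices are functions nat => nat => real (only indices k, l < d matter).\<close>

definition sym_mat :: "nat \<Rightarrow> (nat \<Rightarrow> nat \<Rightarrow> real) \<Rightarrow> bool" where
  "sym_mat d S \<longleftrightarrow> (\<forall>k<d. \<forall>l<d. S k l = S l k)"

definition quad_form :: "nat \<Rightarrow> (nat \<Rightarrow> nat \<Rightarrow> real) \<Rightarrow> (nat \<Rightarrow> real) \<Rightarrow> real" where
  "quad_form d S x = (\<Sum>k<d. \<Sum>l<d. x k * S k l * x l)"

definition pos_def_mat :: "nat \<Rightarrow> (nat \<Rightarrow> nat \<Rightarrow> real) \<Rightarrow> bool" where
  "pos_def_mat d S \<longleftrightarrow> sym_mat d S \<and>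
     (\<forall>x. (\<exists>k<d. x k \<noteq> 0) \<longrightarrow> quad_form d S x > 0)"

definition sym_idempotent_nonzero :: "nat \<Rightarrow> (nat \<Rightarrow> nat \<Rightarrow> real) \<Rightarrow> bool" where
  "sym_idempotent_nonzero d T \<longleftrightarrow> sym_mat d T \<and>
     (\<forall>k<d. \<forall>l<d. (\<Sum>m<d. T k m * T m l) = T k l) \<and>
     (\<exists>k<d. \<exists>l<d. T k l \<noteq> 0)"

definition trace_prod :: "nat \<Rightarrow> (nat \<Rightarrow> nat \<Rightarrow> real) \<Rightarrow> (nat \<Rightarrow> nat \<Rightarrow> real) \<Rightarrow> real" where
  "trace_prod d A B = (\<Sum>k<d. \<Sum>l<d. A k l * B l k)"

definition mvn :: "'w measure \<Rightarrow> nat \<Rightarrow> (nat \<Rightarrow> 'w \<Rightarrow> real) \<Rightarrow> (nat \<Rightarrow> real)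
    \<Rightarrow> (nat \<Rightarrow> nat \<Rightarrow> real) \<Rightarrow> bool" where
  "mvn M d Y mu S \<longleftrightarrow>
     (\<forall>t. (\<exists>k<d. t k \<noteq> 0) \<longrightarrow>
        distributed M lborel (\<lambda>w. \<Sum>k<d. t k * Y k w)
          (normal_density (\<Sum>k<d. t k * mu k) (sqrt (quad_form d S t))))"

text \<open>The model: groups i < a, observations j < n i, coordinates k < d (0-based).\<close>
definition model :: "'w measure \<Rightarrow> nat \<Rightarrow> nat \<Rightarrow> (nat \<Rightarrow> nat)
    \<Rightarrow> (nat \<Rightarrow> nat \<Rightarrow> nat \<Rightarrow> 'w \<Rightarrow> real) \<Rightarrow> (nat \<Rightarrow> nat \<Rightarrow> real)
    \<Rightarrow> (nat \<Rightarrow> nat \<Rightarrow> real) \<Rightarrow> bool" where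
  "model M a d n X mu S \<longleftrightarrow>
     prob_space M \<and> pos_def_mat d S \<and>
     prob_space.indep_vars M (\<lambda>_. Pi\<^sub>M {..<d} (\<lambda>_. borel))
        (\<lambda>(i, j) w. restrict (\<lambda>k. X i j k w) {..<d}) {(i, j). i < a \<and> j < n i} \<and>
     (\<forall>i<a. \<forall>j<n i. mvn M d (X i j) (mu i) S)"

definition estA1 :: "nat \<Rightarrow> nat \<Rightarrow> (nat \<Rightarrow> nat) \<Rightarrow> (nat \<Rightarrow> nat \<Rightarrow> real)
    \<Rightarrow> (nat \<Rightarrow> nat \<Rightarrow> nat \<Rightarrow> 'w \<Rightarrow> real) \<Rightarrow> 'w \<Rightarrow> real" where
  "estA1 a d n T X w =
     (1 / (\<Sum>i<a. real (n i - 1) * real (n i))) *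
     (\<Sum>i<a. \<Sum>l2<n i. \<Sum>l1<l2.
        (\<Sum>k<d. \<Sum>l<d. (X i l1 k w - X i l2 k w) * T k l * (X i l1 l w - X i l2 l w)))"

definition nmax :: "nat \<Rightarrow> (nat \<Rightarrow> nat) \<Rightarrow> nat" where
  "nmax a n = Max (n ` {..<a})"

definition tends_inf :: "(nat \<Rightarrow> nat) \<Rightarrow> bool" where
  "tends_inf f \<longleftrightarrow> filterlim f at_top sequentially"

definition bdd_seq :: "(nat \<Rightarrow> nat) \<Rightarrow> bool" where
  "bdd_seq f \<longleftrightarrow> (\<exists>C. \<forall>\<nu>. f \<nu> \<le> C)"

definition asymptotic_framework :: "(nat \<Rightarrow> nat) \<Rightarrow> (nat \<Rightarrow> nat) \<Rightarrow> (nat \<Rightarrow> nat \<Rightarrow> nat) \<Rightarrow> bool" where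
  "asymptotic_framework a d n \<longleftrightarrow>
     (let N = (\<lambda>\<nu>. \<Sum>i<a \<nu>. n \<nu> i); nm = (\<lambda>\<nu>. nmax (a \<nu>) (n \<nu>)) in
      tends_inf N \<and>
      ((tends_inf a \<and> bdd_seq d \<and> bdd_seq nm) \<or>
       (tends_inf a \<and> tends_inf d \<and> bdd_seq nm) \<or>
       (tends_inf a \<and> bdd_seq d \<and> tends_inf nm) \<or>
       (bdd_seq a \<and> tends_inf d \<and> tends_inf nm) \<or>
       (tends_inf a \<and> tends_inf d \<and> tends_inf nm)))"

definition conv_in_prob :: "(nat \<Rightarrow> 'w measure) \<Rightarrow> (nat \<Rightarrow> 'w \<Rightarrow> real) \<Rightarrow> real \<Rightarrow> bool" where
  "conv_in_prob M Y c \<longleftrightarrow>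
     (\<forall>e>0. (\<lambda>\<nu>. measure (M \<nu>) {w \<in> space (M \<nu>). \<bar>Y \<nu> w - c\<bar> > e}) \<longlonglongrightarrow> 0)"

end

theory Submission
  imports Defs
begin

lemma am2: "\<bar>x * y\<bar> \<le> (x^2 + y^2) / (2::real)"
proof -
  have "0 \<le> (\<bar>x\<bar> - \<bar>y\<bar>)^2" by simp
  then show ?thesis by (simp add: power2_eq_square abs_mult algebra_simps)
qed

lemma lin_aux: "P \<le> (A+B)/2 \<Longrightarrow> Q \<le> (C+E)/2 \<Longrightarrow> 0 \<le> A \<Longrightarrow> 0 \<le> B \<Longrightarrow> 0 \<le> C \<Longrightarrow> 0 \<le> E \<Longrightarrow> (P + Q)/2 \<le> A+B+C+(E::real)"
  by (simp add: field_simps)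

lemma am4: "\<bar>a * b * c * e\<bar> \<le> a^4 + b^4 + c^4 + (e::real)^4"
proof -
  have 1: "\<bar>a*b\<bar> \<le> (a^2+b^2)/2" by (rule am2)
  have 2: "\<bar>c*e\<bar> \<le> (c^2+e^2)/2" by (rule am2)
  have "\<bar>a * b * c * e\<bar> = \<bar>a*b\<bar> * \<bar>c*e\<bar>" by (simp add: abs_mult)
  also have "\<dots> \<le> ((a^2+b^2)/2) * ((c^2+e^2)/2)"
    using 1 2 by (intro mult_mono) auto
  also have "\<dots> \<le> (((a^2+b^2)/2)^2 + ((c^2+e^2)/2)^2)/2"
    using am2[of "(a^2+b^2)/2" "(c^2+e^2)/2"] by simp
  also have "\<dots> \<le> a^4 + b^4 + c^4 + e^4"
  proof -
    have "((a^2+b^2)/2)^2 \<le> (a^4+b^4)/2"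
      using am2[of "a^2" "b^2"] by (simp add: power2_eq_square power4_eq_xxxx field_simps)
    moreover have "((c^2+e^2)/2)^2 \<le> (c^4+e^4)/2"
      using am2[of "c^2" "e^2"] by (simp add: power2_eq_square power4_eq_xxxx field_simps)
    moreover have "0 \<le> a^4" "0 \<le> b^4" "0 \<le> c^4" "0 \<le> e^4" by auto
    ultimately show ?thesis by (rule lin_aux)
  qed
  finally show ?thesis .
qed


lemma amL: "(L::real) > 0 \<Longrightarrow> A * B \<le> (L * A^2 + B^2 / L) / 2"
proof -
  assume L: "L > 0"
  have "0 \<le> (L * A - B)^2" by simp
  then have "2 * L * (A * B) \<le> L * (L * A^2) + B^2" by (simp add: power2_eq_square algebra_simps)
  then have "L * (2 * (A * B)) \<le> L * (L * A^2 + B^2 / L)" using L by (simp add: algebra_simps)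
  then have "2 * (A * B) \<le> L * A^2 + B^2 / L" using mult_le_cancel_left_pos[OF L] by blast
  then show ?thesis by simp
qed

lemma pair_sum: "(\<Sum>l2<N. \<Sum>l1<l2. f l1 + f l2) = real (N - 1) * (\<Sum>j<N. (f j :: real))"
proof (induction N)
  case 0
  then show ?case by simp
next
  case (Suc N)
  have "(\<Sum>l2<Suc N. \<Sum>l1<l2. f l1 + f l2) = real (N - 1) * (\<Sum>j<N. f j) + ((\<Sum>j<N. f j) + real N * f N)"
    using Suc by (simp add: sum.distrib)
  also have "\<dots> = real (Suc N - 1) * (\<Sum>j<Suc N. f j)"
  proof (cases N)
    case 0 then show ?thesis by simp
  next
    case (Suc K) then show ?thesis by (simp add: algebra_simps)
  qed
  finally show ?case .
qed

lemma (in prob_space) int4: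
  fixes f1 f2 f3 f4 :: "'a \<Rightarrow> real"
  assumes [measurable]: "f1 \<in> borel_measurable M" "f2 \<in> borel_measurable M"
    "f3 \<in> borel_measurable M" "f4 \<in> borel_measurable M"
  and i: "integrable M (\<lambda>w. f1 w ^ 4)" "integrable M (\<lambda>w. f2 w ^ 4)"
    "integrable M (\<lambda>w. f3 w ^ 4)" "integrable M (\<lambda>w. f4 w ^ 4)"
  shows "integrable M (\<lambda>w. f1 w * f2 w * f3 w * f4 w)"
proof -
  have 1: "integrable M (\<lambda>w. f1 w ^ 4 + f2 w ^ 4 + f3 w ^ 4 + f4 w ^ 4)"
    using i by auto
  have 2: "(\<lambda>w. f1 w * f2 w * f3 w * f4 w) \<in> borel_measurable M" by measurable
  have 3: "AE w in M. norm (f1 w * f2 w * f3 w * f4 w) \<le> norm (f1 w ^ 4 + f2 w ^ 4 + f3 w ^ 4 + f4 w ^ 4)"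
  proof (rule AE_I2)
    fix w
    have "0 \<le> f1 w ^ 4 + f2 w ^ 4 + f3 w ^ 4 + f4 w ^ 4" by simp
    then show "norm (f1 w * f2 w * f3 w * f4 w) \<le> norm (f1 w ^ 4 + f2 w ^ 4 + f3 w ^ 4 + f4 w ^ 4)"
      using am4[of "f1 w" "f2 w" "f3 w" "f4 w"] by simp
  qed
  show ?thesis by (rule Bochner_Integration.integrable_bound[OF 1 2 3])
qed

lemma (in prob_space) normal_moments:
  assumes D: "distributed M lborel Y (\<lambda>x. ennreal (normal_density c s x))" and s: "0 < s"
  shows "integrable M (\<lambda>w. (Y w - c) ^ k)"
    and "expectation (\<lambda>w. Y w - c) = 0"
    and "expectation (\<lambda>w. (Y w - c)^2) = s^2"
    and "expectation (\<lambda>w. (Y w - c)^4) = 3 * s^4"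
proof -
  have "integrable lborel (\<lambda>x. normal_density c s x * (x - c)^k)"
    using integrable_normal_moment[OF s] .
  then show "integrable M (\<lambda>w. (Y w - c) ^ k)"
    using distributed_integrable[OF D, of "\<lambda>x. (x - c)^k"] by simp
  have "expectation (\<lambda>w. (Y w - c)^(2*0+1)) = 0"
    using distributed_integral[OF D, of "\<lambda>x. (x - c)^(2*0+1)"] integral_normal_moment_odd[OF s, where k=0 and \<mu>=c] by simp
  then show "expectation (\<lambda>w. Y w - c) = 0" by simp
  have "expectation (\<lambda>w. (Y w - c)^(2*1)) = fact (2 * 1) / ((2 / s\<^sup>2)^1 * fact 1)"
    using distributed_integral[OF D, of "\<lambda>x. (x - c)^(2*1)"] integral_normal_moment_even[OF s, where k=1 and \<mu>=c] by simp
  then show "expectation (\<lambda>w. (Y w - c)^2) = s^2" using s by simp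
  have "expectation (\<lambda>w. (Y w - c)^(2*2)) = fact (2 * 2) / ((2 / s\<^sup>2)^2 * fact 2)"
    using distributed_integral[OF D, of "\<lambda>x. (x - c)^(2*2)"] integral_normal_moment_even[OF s, where k=2 and \<mu>=c] by simp
  then show "expectation (\<lambda>w. (Y w - c)^4) = 3 * s^4" using s
    by (simp add: fact_numeral power_divide field_simps)
qed

locale setting = prob_space M
  for M :: "'w measure" +
  fixes a d :: nat and n :: "nat \<Rightarrow> nat" and X :: "nat \<Rightarrow> nat \<Rightarrow> nat \<Rightarrow> 'w \<Rightarrow> real"
    and mu :: "nat \<Rightarrow> nat \<Rightarrow> real" and S T :: "nat \<Rightarrow> nat \<Rightarrow> real"
  assumes model: "model M a d n X mu S"
    and n_ge2: "\<And>i. i < a \<Longrightarrow> n i \<ge> 2"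
    and Tok: "sym_idempotent_nonzero d T"
begin

definition "I = Sigma {..<a} (\<lambda>i. {..<n i})"
definition "V p w = restrict (\<lambda>k. X (fst p) (snd p) k w) {..<d}"
definition "Zf p m v = (\<Sum>k<d. T m k * (v k - mu (fst p) k))"
definition "Z p m w = (\<Sum>k<d. T m k * (X (fst p) (snd p) k w - mu (fst p) k))"
definition "q m = quad_form d S (\<lambda>k. T m k)"
definition "tau = trace_prod d T S"
definition "sq p w = (\<Sum>m<d. (Z p m w)^2)"
definition "G p p' w = (\<Sum>m<d. Z p m w * Z p' m w)"

lemma finite_I[simp]: "finite I" unfolding I_def by auto

lemma indep: "indep_vars (\<lambda>_. PiM {..<d} (\<lambda>_. borel)) V I"
proof -
  have "indep_vars (\<lambda>_. PiM {..<d} (\<lambda>_. borel)) (\<lambda>(i, j) w. restrict (\<lambda>k. X i j k w) {..<d}) {(i, j). i < a \<and> j < n i}"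
    using model unfolding model_def by auto
  moreover have "{(i, j). i < a \<and> j < n i} = I" unfolding I_def by auto
  ultimately show ?thesis
    by (rule indep_vars_cong[THEN iffD1, rotated 3]) (auto simp: V_def split: prod.splits)
qed

lemma V_meas: "p \<in> I \<Longrightarrow> V p \<in> measurable M (PiM {..<d} (\<lambda>_. borel))"
  using indep unfolding indep_vars_def by auto

lemma X_meas: "p \<in> I \<Longrightarrow> k < d \<Longrightarrow> (\<lambda>w. X (fst p) (snd p) k w) \<in> borel_measurable M"
proof -
  assume p: "p \<in> I" and k: "k < d"
  have "(\<lambda>w. V p w k) \<in> borel_measurable M"
    by (rule measurable_compose[OF V_meas[OF p] measurable_component_singleton]) (use k in auto)
  then show ?thesis using k by (simp add: V_def)
qed

lemma Zf_meas[measurable]: "Zf p m \<in> borel_measurable (PiM {..<d} (\<lambda>_. borel))"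
  unfolding Zf_def by measurable

lemma Z_Zf: "Z p m w = Zf p m (V p w)"
  unfolding Z_def Zf_def V_def by (intro sum.cong) auto

lemma Z_meas[measurable]: "p \<in> I \<Longrightarrow> Z p m \<in> borel_measurable M"
  unfolding Z_Zf[abs_def] by (rule measurable_compose[OF V_meas Zf_meas])

lemma symS: "k < d \<Longrightarrow> l < d \<Longrightarrow> S k l = S l k"
  using model unfolding model_def pos_def_mat_def sym_mat_def by auto
lemma symT: "k < d \<Longrightarrow> l < d \<Longrightarrow> T k l = T l k"
  using Tok unfolding sym_idempotent_nonzero_def sym_mat_def by auto
lemma idemT: "k < d \<Longrightarrow> l < d \<Longrightarrow> (\<Sum>m<d. T k m * T m l) = T k l"
  using Tok unfolding sym_idempotent_nonzero_def by auto

lemma q_pos: "(\<exists>k<d. T m k \<noteq> 0) \<Longrightarrow> q m > 0"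
  using model unfolding model_def pos_def_mat_def q_def by auto

lemma q_zero: "\<not>(\<exists>k<d. T m k \<noteq> 0) \<Longrightarrow> q m = 0"
  unfolding q_def quad_form_def by auto

lemma q_nonneg: "q m \<ge> 0"
  using q_pos q_zero by (metis less_le order_refl)

lemma Z_mom:
  assumes p: "p \<in> I" and m: "m < d"
  shows "integrable M (\<lambda>w. Z p m w ^ k)"
    and "expectation (Z p m) = 0"
    and "expectation (\<lambda>w. (Z p m w)^2) = q m"
    and "expectation (\<lambda>w. (Z p m w)^4) = 3 * (q m)^2"
proof -
  have "(\<exists>k<d. T m k \<noteq> 0) \<or> \<not>(\<exists>k<d. T m k \<noteq> 0)" by blast
  then have "integrable M (\<lambda>w. Z p m w ^ k) \<and> expectation (Z p m) = 0
     \<and> expectation (\<lambda>w. (Z p m w)^2) = q m \<and> expectation (\<lambda>w. (Z p m w)^4) = 3 * (q m)^2"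
  proof
    assume nz: "\<exists>k<d. T m k \<noteq> 0"
    have qp: "q m > 0" using q_pos[OF nz] .
    have "fst p < a" "snd p < n (fst p)" using p unfolding I_def by auto
    then have mv: "mvn M d (X (fst p) (snd p)) (mu (fst p)) S"
      using model unfolding model_def by auto
    have D: "distributed M lborel (\<lambda>w. \<Sum>k<d. T m k * X (fst p) (snd p) k w)
         (\<lambda>x. ennreal (normal_density (\<Sum>k<d. T m k * mu (fst p) k) (sqrt (q m)) x))"
      using mv nz unfolding mvn_def q_def by auto
    have sp: "0 < sqrt (q m)" using qp by simp
    have Zeq: "Z p m = (\<lambda>w. (\<Sum>k<d. T m k * X (fst p) (snd p) k w) - (\<Sum>k<d. T m k * mu (fst p) k))"
      unfolding Z_def by (auto simp: sum_subtractf right_diff_distrib)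
    have "sqrt (q m) ^ 4 = (sqrt (q m) ^ 2)^2" by (simp flip: power_mult)
    also have "\<dots> = (q m)^2" using qp by simp
    finally have s4: "sqrt (q m) ^ 4 = (q m)^2" .
    show ?thesis
      unfolding Zeq using s4 using normal_moments(1)[OF D sp, of k] normal_moments(2-4)[OF D sp] qp by (simp add: power_mult[symmetric] del: power_mult)
  next
    assume z: "\<not>(\<exists>k<d. T m k \<noteq> 0)"
    then have "Z p m = (\<lambda>w. 0)" unfolding Z_def by auto
    then show ?thesis using q_zero[OF z] by (simp add: power_0_left)
  qed
  then show "integrable M (\<lambda>w. Z p m w ^ k)"
    and "expectation (Z p m) = 0"
    and "expectation (\<lambda>w. (Z p m w)^2) = q m"
    and "expectation (\<lambda>w. (Z p m w)^4) = 3 * (q m)^2" by auto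
qed


lemma Z_int: "p \<in> I \<Longrightarrow> m < d \<Longrightarrow> integrable M (Z p m)"
  using Z_mom(1)[of p m 1] by simp

lemma ZZZZ_int:
  assumes "p1 \<in> I" "p2 \<in> I" "p3 \<in> I" "p4 \<in> I" "m1 < d" "m2 < d" "m3 < d" "m4 < d"
  shows "integrable M (\<lambda>w. Z p1 m1 w * Z p2 m2 w * Z p3 m3 w * Z p4 m4 w)"
  using assms by (intro int4 Z_mom(1) Z_meas)

lemma ZZZ_int:
  assumes "p1 \<in> I" "p2 \<in> I" "p3 \<in> I" "m1 < d" "m2 < d" "m3 < d"
  shows "integrable M (\<lambda>w. Z p1 m1 w * Z p2 m2 w * Z p3 m3 w)"
  using int4[of "Z p1 m1" "Z p2 m2" "Z p3 m3" "\<lambda>_. 1"] assms by (simp add: Z_mom(1))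

lemma ZZ_int:
  assumes "p1 \<in> I" "p2 \<in> I" "m1 < d" "m2 < d"
  shows "integrable M (\<lambda>w. Z p1 m1 w * Z p2 m2 w)"
  using int4[of "Z p1 m1" "Z p2 m2" "\<lambda>_. 1" "\<lambda>_. 1"] assms by (simp add: Z_mom(1))

lemma indep_prod:
  fixes g :: "(nat \<Rightarrow> real) \<Rightarrow> real" and h :: "((nat \<times> nat) \<Rightarrow> (nat \<Rightarrow> real)) \<Rightarrow> real"
  assumes e: "e \<in> I" and J: "J \<subseteq> I" "e \<notin> J"
   and g[measurable]: "g \<in> borel_measurable (PiM {..<d} (\<lambda>_. borel))"
   and h[measurable]: "h \<in> borel_measurable (PiM J (\<lambda>_. PiM {..<d} (\<lambda>_. borel)))"
   and ig: "integrable M (\<lambda>w. g (V e w))" and ih: "integrable M (\<lambda>w. h (\<lambda>q\<in>J. V q w))"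
  shows "integrable M (\<lambda>w. g (V e w) * h (\<lambda>q\<in>J. V q w))"
   and "expectation (\<lambda>w. g (V e w) * h (\<lambda>q\<in>J. V q w)) = expectation (\<lambda>w. g (V e w)) * expectation (\<lambda>w. h (\<lambda>q\<in>J. V q w))"
proof -
  have iv: "indep_var (PiM {e} (\<lambda>_. PiM {..<d} (\<lambda>_. borel))) (\<lambda>\<omega>. restrict (\<lambda>i. V i \<omega>) {e})
      (PiM J (\<lambda>_. PiM {..<d} (\<lambda>_. borel))) (\<lambda>\<omega>. restrict (\<lambda>i. V i \<omega>) J)"
    by (rule indep_var_restrict[OF indep]) (use e J in auto)
  have gm: "(\<lambda>f. g (f e)) \<in> borel_measurable (PiM {e} (\<lambda>_. PiM {..<d} (\<lambda>_. borel)))"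
    by measurable
  have iv2: "indep_var borel ((\<lambda>f. g (f e)) \<circ> (\<lambda>\<omega>. restrict (\<lambda>i. V i \<omega>) {e})) borel (h \<circ> (\<lambda>\<omega>. restrict (\<lambda>i. V i \<omega>) J))"
    by (rule indep_var_compose[OF iv gm h])
  have eq1: "((\<lambda>f. g (f e)) \<circ> (\<lambda>\<omega>. restrict (\<lambda>i. V i \<omega>) {e})) = (\<lambda>w. g (V e w))" by auto
  have eq2: "(h \<circ> (\<lambda>\<omega>. restrict (\<lambda>i. V i \<omega>) J)) = (\<lambda>w. h (\<lambda>q\<in>J. V q w))" by auto
  have iv3: "indep_var borel (\<lambda>w. g (V e w)) borel (\<lambda>w. h (\<lambda>q\<in>J. V q w))"
    using iv2 unfolding eq1 eq2 .
  show "integrable M (\<lambda>w. g (V e w) * h (\<lambda>q\<in>J. V q w))"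
    using indep_var_integrable[OF iv3] ig ih by simp
  show "expectation (\<lambda>w. g (V e w) * h (\<lambda>q\<in>J. V q w)) = expectation (\<lambda>w. g (V e w)) * expectation (\<lambda>w. h (\<lambda>q\<in>J. V q w))"
    using indep_var_lebesgue_integral[OF iv3] ig ih by simp
qed


lemma tau_q: "tau = (\<Sum>m<d. q m)"
proof -
  have "(\<Sum>m<d. q m) = (\<Sum>m<d. \<Sum>k<d. \<Sum>l<d. T m k * S k l * T m l)"
    unfolding q_def quad_form_def by simp
  also have "\<dots> = (\<Sum>k<d. \<Sum>m<d. \<Sum>l<d. T m k * S k l * T m l)"
    by (rule sum.swap)
  also have "\<dots> = (\<Sum>k<d. \<Sum>l<d. \<Sum>m<d. T m k * S k l * T m l)"
    by (intro sum.cong refl sum.swap)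
  also have "\<dots> = (\<Sum>k<d. \<Sum>l<d. S k l * (\<Sum>m<d. T k m * T m l))"
    by (intro sum.cong refl) (auto simp: sum_distrib_left symT mult_ac)
  also have "\<dots> = (\<Sum>k<d. \<Sum>l<d. T k l * S l k)"
    by (intro sum.cong refl) (auto simp: idemT symS)
  finally show ?thesis unfolding tau_def trace_prod_def by simp
qed

lemma tau_pos: "tau > 0"
proof -
  obtain k l where kl: "k < d" "l < d" "T k l \<noteq> 0"
    using Tok unfolding sym_idempotent_nonzero_def by auto
  have "q k > 0" using q_pos kl by auto
  moreover have "q k \<le> (\<Sum>m<d. q m)"
    by (rule member_le_sum) (use kl q_nonneg in auto)
  ultimately show ?thesis unfolding tau_q by simp
qed

definition "sqf p v = (\<Sum>m<d. (Zf p m v)^2)"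

lemma sqf_meas[measurable]: "sqf p \<in> borel_measurable (PiM {..<d} (\<lambda>_. borel))"
  unfolding sqf_def by measurable

lemma sq_sqf: "sq p w = sqf p (V p w)"
  unfolding sq_def sqf_def Z_Zf ..

lemma sq_int: "p \<in> I \<Longrightarrow> integrable M (sq p)"
  unfolding sq_def by (intro Bochner_Integration.integrable_sum Z_mom(1)) auto

lemma sq_exp: "p \<in> I \<Longrightarrow> expectation (sq p) = tau"
  unfolding sq_def tau_q
  by (subst Bochner_Integration.integral_sum) (auto intro!: sum.cong Z_mom(1) simp: Z_mom(3))

lemma indepZ:
  fixes h :: "((nat \<times> nat) \<Rightarrow> (nat \<Rightarrow> real)) \<Rightarrow> real"
  assumes e: "e \<in> I" and J: "J \<subseteq> I" "e \<notin> J" and m: "m < d"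
   and h[measurable]: "h \<in> borel_measurable (PiM J (\<lambda>_. PiM {..<d} (\<lambda>_. borel)))"
   and ih: "integrable M (\<lambda>w. h (\<lambda>q\<in>J. V q w))"
  shows "integrable M (\<lambda>w. Z e m w * h (\<lambda>q\<in>J. V q w))"
   and "expectation (\<lambda>w. Z e m w * h (\<lambda>q\<in>J. V q w)) = 0"
proof -
  have ig: "integrable M (\<lambda>w. Zf e m (V e w))"
    using Z_int[OF e m] unfolding Z_Zf[abs_def] .
  note r = indep_prod[OF e J Zf_meas h ig ih]
  show "integrable M (\<lambda>w. Z e m w * h (\<lambda>q\<in>J. V q w))"
    using r(1) unfolding Z_Zf[symmetric] .
  show "expectation (\<lambda>w. Z e m w * h (\<lambda>q\<in>J. V q w)) = 0"
  proof -
    have e0: "expectation (\<lambda>w. Zf e m (V e w)) = 0" using Z_mom(2)[OF e m] unfolding Z_Zf[abs_def] .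
    have "expectation (\<lambda>w. Zf e m (V e w) * h (\<lambda>q\<in>J. V q w)) = 0"
      using r(2) unfolding e0 mult_zero_left .
    then show ?thesis unfolding Z_Zf .
  qed
qed

lemma ZZ_exp:
  assumes "x \<in> I" "y \<in> I" "x \<noteq> y" "m < d"
  shows "expectation (\<lambda>w. Z x m w * Z y m w) = 0"
proof -
  have "expectation (\<lambda>w. Z x m w * (\<lambda>f. Zf y m (f y)) (\<lambda>q\<in>{y}. V q w)) = 0"
    by (rule indepZ(2)) (use assms in \<open>auto simp: Z_Zf[symmetric] Z_int\<close>)
  then show ?thesis by (simp add: Z_Zf[symmetric])
qed

lemma G_int: "x \<in> I \<Longrightarrow> y \<in> I \<Longrightarrow> integrable M (G x y)"
  unfolding G_def by (intro Bochner_Integration.integrable_sum ZZ_int) auto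

lemma G_exp: "x \<in> I \<Longrightarrow> y \<in> I \<Longrightarrow> x \<noteq> y \<Longrightarrow> expectation (G x y) = 0"
  unfolding G_def by (subst Bochner_Integration.integral_sum) (auto intro!: ZZ_int simp: ZZ_exp)

lemma sqsq_int: "p \<in> I \<Longrightarrow> q' \<in> I \<Longrightarrow> integrable M (\<lambda>w. sq p w * sq q' w)"
  unfolding sq_def sum_product by (intro Bochner_Integration.integrable_sum) (auto simp: power2_eq_square mult.assoc[symmetric] intro!: ZZZZ_int)

lemma sqsq_exp:
  assumes p: "p \<in> I" and q: "q' \<in> I" and pq: "p \<noteq> q'"
  shows "expectation (\<lambda>w. (sq p w - tau) * (sq q' w - tau)) = 0"
    and "expectation (\<lambda>w. sq p w * sq q' w) = tau^2"
proof -
  have ig: "integrable M (\<lambda>w. sqf p (V p w) - tau)"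
    using sq_int[OF p] unfolding sq_sqf[abs_def] by auto
  have ih: "integrable M (\<lambda>w. (\<lambda>f. sqf q' (f q') - tau) (\<lambda>q\<in>{q'}. V q w))"
    using sq_int[OF q] unfolding sq_sqf[abs_def] by auto
  note r = indep_prod[of p "{q'}" "\<lambda>v. sqf p v - tau" "\<lambda>f. sqf q' (f q') - tau", OF p _ _ _ _ ig ih]
  have "expectation (\<lambda>w. sq p w - tau) = 0"
    using sq_exp[OF p] sq_int[OF p] by (simp add: prob_space)
  then show "expectation (\<lambda>w. (sq p w - tau) * (sq q' w - tau)) = 0"
    using r(2) q pq by (simp add: sq_sqf[symmetric])
  have ig2: "integrable M (\<lambda>w. sqf p (V p w))"
    using sq_int[OF p] unfolding sq_sqf[abs_def] by auto
  have ih2: "integrable M (\<lambda>w. (\<lambda>f. sqf q' (f q')) (\<lambda>q\<in>{q'}. V q w))"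
    using sq_int[OF q] unfolding sq_sqf[abs_def] by auto
  note r2 = indep_prod[of p "{q'}" "\<lambda>v. sqf p v" "\<lambda>f. sqf q' (f q')", OF p _ _ _ _ ig2 ih2]
  show "expectation (\<lambda>w. sq p w * sq q' w) = tau^2"
    using r2(2) q pq sq_exp[OF p] sq_exp[OF q] by (simp add: sq_sqf[symmetric] power2_eq_square)
qed


lemma Z_zero: "q m = 0 \<Longrightarrow> Z p m w = 0"
proof -
  assume "q m = 0"
  then have "\<not>(\<exists>k<d. T m k \<noteq> 0)" using q_pos by force
  then show ?thesis unfolding Z_def by auto
qed

lemma ZZ2:
  assumes p: "p \<in> I" and m: "m < d" "m' < d"
  shows "expectation (\<lambda>w. (Z p m w)^2 * (Z p m' w)^2) \<le> 3 * q m * q m'"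
proof (cases "q m = 0 \<or> q m' = 0")
  case True
  then have "(\<lambda>w. (Z p m w)^2 * (Z p m' w)^2) = (\<lambda>w. 0)"
    by (elim disjE) (auto simp: Z_zero)
  then show ?thesis using q_nonneg[of m] q_nonneg[of m'] by simp
next
  case False
  then have qp: "q m > 0" "q m' > 0" using q_nonneg[of m] q_nonneg[of m'] by (simp_all add: less_le)
  define L where "L = q m' / q m"
  have L: "L > 0" unfolding L_def using qp by simp
  have pw: "\<And>w. (Z p m w)^2 * (Z p m' w)^2 \<le> (L * (Z p m w)^4 + (Z p m' w)^4 / L)/2"
    using amL[OF L, of "(Z p m w)^2" "(Z p m' w)^2" for w] by (simp flip: power_mult)
  have i1: "integrable M (\<lambda>w. (Z p m w)^2 * (Z p m' w)^2)"
    using ZZZZ_int[of p p p p m m m' m'] p m by (simp add: power2_eq_square mult.assoc)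
  have i2: "integrable M (\<lambda>w. (L * (Z p m w)^4 + (Z p m' w)^4 / L)/2)"
    using Z_mom(1)[OF p m(1), of 4] Z_mom(1)[OF p m(2), of 4] by auto
  have "expectation (\<lambda>w. (Z p m w)^2 * (Z p m' w)^2) \<le> expectation (\<lambda>w. (L * (Z p m w)^4 + (Z p m' w)^4 / L)/2)"
    by (rule integral_mono[OF i1 i2 pw])
  also have "\<dots> = (L * (3 * (q m)^2) + (3 * (q m')^2) / L) / 2"
    using Z_mom(1)[OF p m(1), of 4] Z_mom(1)[OF p m(2), of 4] Z_mom(4)[OF p m(1)] Z_mom(4)[OF p m(2)]
    by (simp add: Bochner_Integration.integral_add)
  also have "\<dots> = 3 * q m * q m'"
    unfolding L_def using qp by (simp add: field_simps power2_eq_square)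
  finally show ?thesis .
qed

lemma sq2_exp: "p \<in> I \<Longrightarrow> expectation (\<lambda>w. sq p w * sq p w) \<le> 3 * tau^2"
proof -
  assume p: "p \<in> I"
  have "expectation (\<lambda>w. sq p w * sq p w) = (\<Sum>m<d. \<Sum>m'<d. expectation (\<lambda>w. (Z p m w)^2 * (Z p m' w)^2))"
    unfolding sq_def sum_product using p
    by (subst Bochner_Integration.integral_sum, (auto intro!: Bochner_Integration.integrable_sum ZZZZ_int simp: power2_eq_square mult.assoc[symmetric])[1])
       (auto intro!: sum.cong Bochner_Integration.integral_sum ZZZZ_int simp: power2_eq_square mult.assoc[symmetric])
  also have "\<dots> \<le> (\<Sum>m<d. \<Sum>m'<d. 3 * q m * q m')"
    by (intro sum_mono ZZ2 p) auto
  also have "\<dots> = 3 * tau^2"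
    unfolding tau_q power2_eq_square by (simp add: sum_distrib_left sum_distrib_right mult.assoc mult.commute[of "q _" "q _"])
  finally show ?thesis .
qed

lemma sqc2_exp: "p \<in> I \<Longrightarrow> expectation (\<lambda>w. (sq p w - tau) * (sq p w - tau)) \<le> 2 * tau^2"
proof -
  assume p: "p \<in> I"
  have eq: "(\<lambda>w. (sq p w - tau) * (sq p w - tau)) = (\<lambda>w. (sq p w * sq p w - 2 * tau * sq p w) + tau^2)"
    by (auto simp: algebra_simps power2_eq_square)
  have "expectation (\<lambda>w. (sq p w - tau) * (sq p w - tau)) = expectation (\<lambda>w. sq p w * sq p w) - 2 * tau * tau + tau^2"
    unfolding eq using sqsq_int[OF p p] sq_int[OF p] sq_exp[OF p]
    by (simp add: Bochner_Integration.integral_add Bochner_Integration.integral_diff prob_space)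
  then show ?thesis using sq2_exp[OF p] by (simp add: power2_eq_square)
qed

lemma GG_int: "x \<in> I \<Longrightarrow> y \<in> I \<Longrightarrow> u \<in> I \<Longrightarrow> v \<in> I \<Longrightarrow> integrable M (\<lambda>w. G x y w * G u v w)"
  unfolding G_def sum_product
  by (intro Bochner_Integration.integrable_sum) (auto simp: mult.assoc[symmetric] intro!: ZZZZ_int)

lemma sqc_int: "p \<in> I \<Longrightarrow> p' \<in> I \<Longrightarrow> integrable M (\<lambda>w. (sq p w - tau) * (sq p' w - tau))"
proof -
  assume p: "p \<in> I" "p' \<in> I"
  have eq: "(\<lambda>w. (sq p w - tau) * (sq p' w - tau)) = (\<lambda>w. sq p w * sq p' w - tau * sq p w - tau * sq p' w + tau * tau)"
    by (auto simp: algebra_simps)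
  show ?thesis unfolding eq using sqsq_int[OF p] sq_int p by auto
qed

lemma GG2_exp:
  assumes "x \<in> I" "y \<in> I" "x \<noteq> y"
  shows "expectation (\<lambda>w. G x y w * G x y w) \<le> tau^2"
proof -
  have "expectation (\<lambda>w. G x y w * G x y w) \<le> expectation (\<lambda>w. sq x w * sq y w)"
  proof (rule integral_mono)
    show "integrable M (\<lambda>w. G x y w * G x y w)" using GG_int assms by auto
    show "integrable M (\<lambda>w. sq x w * sq y w)" using sqsq_int assms by auto
    fix w
    show "G x y w * G x y w \<le> sq x w * sq y w"
      unfolding G_def sq_def using Cauchy_Schwarz_ineq_sum[of "\<lambda>m. Z x m w" "\<lambda>m. Z y m w" "{..<d}"]
      by (simp add: power2_eq_square)
  qed
  also have "\<dots> = tau^2" using sqsq_exp(2) assms by auto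
  finally show ?thesis .
qed

lemma lone:
  assumes e: "e \<in> I" and abc: "a' \<in> I" "b \<in> I" "c \<in> I" and ne: "e \<noteq> a'" "e \<noteq> b" "e \<noteq> c"
    and m: "m < d" "m1 < d" "m2 < d" "m3 < d"
  shows "expectation (\<lambda>w. Z e m w * (Z a' m1 w * Z b m2 w * Z c m3 w)) = 0"
proof -
  let ?h = "\<lambda>f. Zf a' m1 (f a') * Zf b m2 (f b) * Zf c m3 (f c)"
  have hm: "?h \<in> borel_measurable (PiM {a', b, c} (\<lambda>_. PiM {..<d} (\<lambda>_. borel)))" by measurable
  have ih: "integrable M (\<lambda>w. ?h (\<lambda>q\<in>{a', b, c}. V q w))"
    using ZZZ_int[OF abc m(2-4)] by (simp add: Z_Zf[symmetric])
  have "expectation (\<lambda>w. Z e m w * ?h (\<lambda>q\<in>{a', b, c}. V q w)) = 0"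
    by (rule indepZ(2)[OF e _ _ m(1) hm ih]) (use abc ne in auto)
  then show ?thesis by (simp add: Z_Zf[symmetric])
qed

lemma GG_exp0:
  assumes I4: "x \<in> I" "y \<in> I" "u \<in> I" "v \<in> I" and xy: "x \<noteq> y" and lo: "x \<notin> {u, v} \<or> y \<notin> {u, v}"
  shows "expectation (\<lambda>w. G x y w * G u v w) = 0"
proof -
  have t0: "expectation (\<lambda>w. (Z x m w * Z y m w) * (Z u m' w * Z v m' w)) = 0" if m: "m < d" "m' < d" for m m'
  proof (cases "x \<notin> {u, v}")
    case True
    have "expectation (\<lambda>w. Z x m w * (Z y m w * Z u m' w * Z v m' w)) = 0"
      by (rule lone) (use I4 xy True m in auto)
    then show ?thesis by (simp add: mult_ac)
  next
    case False
    then have yl: "y \<notin> {u, v}" using lo by auto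
    have "expectation (\<lambda>w. Z y m w * (Z x m w * Z u m' w * Z v m' w)) = 0"
      by (rule lone) (use I4 xy yl m in auto)
    then show ?thesis by (simp add: mult_ac)
  qed
  have "expectation (\<lambda>w. G x y w * G u v w) = (\<Sum>m<d. \<Sum>m'<d. expectation (\<lambda>w. (Z x m w * Z y m w) * (Z u m' w * Z v m' w)))"
    unfolding G_def sum_product using I4
    by (subst Bochner_Integration.integral_sum, (auto intro!: Bochner_Integration.integrable_sum ZZZZ_int simp: mult.assoc[symmetric])[1])
       (auto intro!: sum.cong Bochner_Integration.integral_sum ZZZZ_int simp: mult.assoc[symmetric])
  also have "\<dots> = 0" using t0 by simp
  finally show ?thesis .
qed


definition "D = (\<Sum>i<a. real (n i - 1) * real (n i))"
definition "c p = real (n (fst p) - 1)"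
definition "Pairs = (SIGMA i:{..<a}. SIGMA l2:{..<n i}. {..<l2})"
definition "GG t w = G (fst t, snd (snd t)) (fst t, fst (snd t)) w"
definition "A1 w = (1/D) * ((\<Sum>p\<in>I. c p * sq p w) - 2 * (\<Sum>t\<in>Pairs. GG t w))"

lemma quad_id: "(\<Sum>k<d. \<Sum>l<d. (X i l1 k w - X i l2 k w) * T k l * (X i l1 l w - X i l2 l w))
   = sq (i,l1) w + sq (i,l2) w - 2 * G (i,l1) (i,l2) w"
proof -
  define Dk where "Dk k = X i l1 k w - X i l2 k w" for k
  have zd: "Z (i,l1) m w - Z (i,l2) m w = (\<Sum>k<d. T m k * Dk k)" for m
    unfolding Z_def Dk_def by (simp add: sum_subtractf[symmetric] algebra_simps)
  have "sq (i,l1) w + sq (i,l2) w - 2 * G (i,l1) (i,l2) w = (\<Sum>m<d. (Z (i,l1) m w - Z (i,l2) m w)^2)"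
    unfolding sq_def G_def by (simp add: power2_diff sum.distrib sum_subtractf sum_distrib_left mult.assoc)
  also have "\<dots> = (\<Sum>m<d. (\<Sum>k<d. T m k * Dk k) * (\<Sum>l<d. T m l * Dk l))"
    by (simp add: zd power2_eq_square)
  also have "\<dots> = (\<Sum>m<d. \<Sum>k<d. \<Sum>l<d. Dk k * Dk l * (T m k * T m l))"
    by (simp add: sum_product mult_ac)
  also have "\<dots> = (\<Sum>k<d. \<Sum>m<d. \<Sum>l<d. Dk k * Dk l * (T m k * T m l))"
    by (rule sum.swap)
  also have "\<dots> = (\<Sum>k<d. \<Sum>l<d. \<Sum>m<d. Dk k * Dk l * (T m k * T m l))"
    by (intro sum.cong refl sum.swap)
  also have "\<dots> = (\<Sum>k<d. \<Sum>l<d. Dk k * Dk l * (\<Sum>m<d. T k m * T m l))"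
    by (intro sum.cong refl) (auto simp: sum_distrib_left symT)
  also have "\<dots> = (\<Sum>k<d. \<Sum>l<d. Dk k * T k l * Dk l)"
    by (intro sum.cong refl) (auto simp: idemT)
  finally show ?thesis unfolding Dk_def by simp
qed

lemma sum_I: "(\<Sum>i<a. \<Sum>j<n i. f (i, j)) = (\<Sum>p\<in>I. (f p :: real))"
proof -
  have "(\<Sum>i<a. \<Sum>j<n i. f (i, j)) = (\<Sum>(i,j)\<in>I. f (i, j))"
    unfolding I_def by (rule sum.Sigma) auto
  also have "\<dots> = (\<Sum>p\<in>I. f p)" by (intro sum.cong) auto
  finally show ?thesis .
qed

lemma sum_Pairs: "(\<Sum>i<a. \<Sum>l2<n i. \<Sum>l1<l2. f i l2 l1) = (\<Sum>t\<in>Pairs. (f (fst t) (fst (snd t)) (snd (snd t)) :: real))"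
proof -
  have "(\<Sum>i<a. \<Sum>l2<n i. \<Sum>l1<l2. f i l2 l1) = (\<Sum>i<a. \<Sum>(l2,l1)\<in>(SIGMA l2:{..<n i}. {..<l2}). f i l2 l1)"
    by (intro sum.cong refl sum.Sigma) auto
  also have "\<dots> = (\<Sum>(i,u)\<in>Pairs. (\<lambda>(l2,l1). f i l2 l1) u)"
    unfolding Pairs_def by (rule sum.Sigma) auto
  also have "\<dots> = (\<Sum>t\<in>Pairs. f (fst t) (fst (snd t)) (snd (snd t)))"
    by (intro sum.cong) auto
  finally show ?thesis .
qed

lemma finite_Pairs[simp]: "finite Pairs" unfolding Pairs_def by auto

lemma sum_c: "(\<Sum>p\<in>I. c p) = D"
proof -
  have "(\<Sum>p\<in>I. c p) = (\<Sum>i<a. \<Sum>j<n i. c (i,j))" using sum_I[of c] by simp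
  also have "\<dots> = D" unfolding D_def c_def
    by (intro sum.cong refl) (use n_ge2 in \<open>auto simp: of_nat_diff mult.commute\<close>)
  finally show ?thesis .
qed

lemma estA1_eq: "estA1 a d n T X w = A1 w"
proof -
  have "(\<Sum>i<a. \<Sum>l2<n i. \<Sum>l1<l2.
        (\<Sum>k<d. \<Sum>l<d. (X i l1 k w - X i l2 k w) * T k l * (X i l1 l w - X i l2 l w)))
      = (\<Sum>i<a. \<Sum>l2<n i. \<Sum>l1<l2. (sq (i,l1) w + sq (i,l2) w) - 2 * G (i,l1) (i,l2) w)"
    by (simp add: quad_id)
  also have "\<dots> = (\<Sum>i<a. real (n i - 1) * (\<Sum>j<n i. sq (i,j) w) - 2 * (\<Sum>l2<n i. \<Sum>l1<l2. G (i,l1) (i,l2) w))"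
  proof (intro sum.cong refl)
    fix i
    show "(\<Sum>l2<n i. \<Sum>l1<l2. (sq (i,l1) w + sq (i,l2) w) - 2 * G (i,l1) (i,l2) w)
       = real (n i - 1) * (\<Sum>j<n i. sq (i,j) w) - 2 * (\<Sum>l2<n i. \<Sum>l1<l2. G (i,l1) (i,l2) w)"
      using pair_sum[where N="n i" and f="\<lambda>j. sq (i,j) w"] by (simp add: sum_subtractf sum_distrib_left)
  qed
  also have "\<dots> = (\<Sum>i<a. real (n i - 1) * (\<Sum>j<n i. sq (i,j) w)) - 2 * (\<Sum>i<a. \<Sum>l2<n i. \<Sum>l1<l2. G (i,l1) (i,l2) w)"
    by (simp add: sum_subtractf sum_distrib_left)
  also have "\<dots> = (\<Sum>p\<in>I. c p * sq p w) - 2 * (\<Sum>t\<in>Pairs. GG t w)"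
    using sum_I[of "\<lambda>p. c p * sq p w"] sum_Pairs[of "\<lambda>i l2 l1. G (i,l1) (i,l2) w"]
    by (simp add: c_def GG_def sum_distrib_left)
  finally show ?thesis unfolding estA1_def A1_def D_def by simp
qed


lemma Pairs_mem: "t \<in> Pairs \<Longrightarrow> (fst t, snd (snd t)) \<in> I \<and> (fst t, fst (snd t)) \<in> I \<and> snd (snd t) < fst (snd t)"
  unfolding Pairs_def I_def by auto

lemma GG_int1: "t \<in> Pairs \<Longrightarrow> integrable M (GG t)"
  unfolding GG_def[abs_def] using Pairs_mem G_int by blast

lemma GG_exp: "t \<in> Pairs \<Longrightarrow> expectation (GG t) = 0"
  unfolding GG_def[abs_def] using Pairs_mem G_exp by fastforce

lemma GGGG_int: "t \<in> Pairs \<Longrightarrow> t' \<in> Pairs \<Longrightarrow> integrable M (\<lambda>w. GG t w * GG t' w)"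
  unfolding GG_def using Pairs_mem GG_int by blast

lemma GGGG_exp: "t \<in> Pairs \<Longrightarrow> t' \<in> Pairs \<Longrightarrow> t \<noteq> t' \<Longrightarrow> expectation (\<lambda>w. GG t w * GG t' w) = 0"
proof -
  assume t: "t \<in> Pairs" "t' \<in> Pairs" "t \<noteq> t'"
  obtain i l2 l1 where ti: "t = (i, l2, l1)" by (cases t) auto
  obtain i' l2' l1' where ti': "t' = (i', l2', l1')" by (cases t') auto
  have m: "(i, l1) \<in> I" "(i, l2) \<in> I" "(i', l1') \<in> I" "(i', l2') \<in> I" "l1 < l2" "l1' < l2'"
    using Pairs_mem[OF t(1)] Pairs_mem[OF t(2)] ti ti' by auto
  have lo: "(i, l1) \<notin> {(i', l1'), (i', l2')} \<or> (i, l2) \<notin> {(i', l1'), (i', l2')}"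
    using t(3) m(5,6) ti ti' by auto
  show ?thesis unfolding GG_def ti ti' using GG_exp0[OF m(1-4) _ lo] m(5) by simp
qed

lemma A1_meas[measurable]: "A1 \<in> borel_measurable M"
proof -
  have 1: "(\<lambda>w. \<Sum>p\<in>I. c p * sq p w) \<in> borel_measurable M"
    by (intro borel_measurable_sum borel_measurable_times borel_measurable_const) (auto intro: borel_measurable_integrable[OF sq_int])
  have 2: "(\<lambda>w. \<Sum>t\<in>Pairs. GG t w) \<in> borel_measurable M"
    by (intro borel_measurable_sum) (auto intro: borel_measurable_integrable[OF GG_int1])
  show ?thesis unfolding A1_def[abs_def] using 1 2 by measurable
qed

lemma D_ge_N: "real (\<Sum>i<a. n i) \<le> D"
  unfolding D_def of_nat_sum
proof (intro sum_mono)
  fix i assume "i \<in> {..<a}"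
  then have "n i \<ge> 2" using n_ge2 by auto
  then show "real (n i) \<le> real (n i - 1) * real (n i)" by (simp add: of_nat_diff algebra_simps)
qed

lemma N_pos: "a \<ge> 1 \<Longrightarrow> real (\<Sum>i<a. n i) \<ge> 1"
proof -
  assume "a \<ge> 1"
  then have "n 0 \<le> (\<Sum>i<a. n i)" by (intro member_le_sum) auto
  moreover have "n 0 \<ge> 2" using n_ge2 \<open>a \<ge> 1\<close> by auto
  ultimately have "1 \<le> (\<Sum>i<a. n i)" by linarith
  then show ?thesis by (metis of_nat_1 of_nat_le_iff)
qed

lemma A1_int_exp: "a \<ge> 1 \<Longrightarrow> integrable M A1 \<and> expectation A1 = tau"
proof -
  assume a1: "a \<ge> 1"
  have Dp: "D > 0" using D_ge_N N_pos[OF a1] by linarith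
  have iS: "integrable M (\<lambda>w. \<Sum>p\<in>I. c p * sq p w)" using sq_int by auto
  have iG: "integrable M (\<lambda>w. \<Sum>t\<in>Pairs. GG t w)" using GG_int1 by auto
  have eS: "expectation (\<lambda>w. \<Sum>p\<in>I. c p * sq p w) = D * tau"
    using sq_int sq_exp sum_c
    by (simp add: Bochner_Integration.integral_sum sum_distrib_right[symmetric])
  have eG: "expectation (\<lambda>w. \<Sum>t\<in>Pairs. GG t w) = 0"
    using GG_int1 GG_exp by (simp add: Bochner_Integration.integral_sum)
  show ?thesis unfolding A1_def[abs_def] using iS iG eS eG Dp
    by (simp add: Bochner_Integration.integral_diff)
qed


definition "B0 w = (\<Sum>p\<in>I. c p * (sq p w - tau))"
definition "C0 w = (\<Sum>t\<in>Pairs. GG t w)"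

lemma A1_dec: "D > 0 \<Longrightarrow> A1 w - tau = B0 w / D - 2 * C0 w / D"
proof -
  assume Dp: "D > 0"
  have "B0 w = (\<Sum>p\<in>I. c p * sq p w) - tau * D"
    unfolding B0_def sum_c[symmetric] by (simp add: right_diff_distrib sum_subtractf sum_distrib_left mult.commute)
  then show ?thesis unfolding A1_def C0_def using Dp by (simp add: field_simps)
qed

lemma c_nonneg: "c p \<ge> 0" unfolding c_def by simp

lemma B0_sq: "integrable M (\<lambda>w. B0 w * B0 w) \<and> expectation (\<lambda>w. B0 w * B0 w) \<le> 2 * tau^2 * (\<Sum>p\<in>I. (c p)^2)"
proof -
  have eq: "(\<lambda>w. B0 w * B0 w) = (\<lambda>w. \<Sum>p\<in>I. \<Sum>p'\<in>I. (c p * c p') * ((sq p w - tau) * (sq p' w - tau)))"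
    unfolding B0_def sum_product by (simp add: mult_ac)
  have it: "p \<in> I \<Longrightarrow> p' \<in> I \<Longrightarrow> integrable M (\<lambda>w. (c p * c p') * ((sq p w - tau) * (sq p' w - tau)))" for p p'
    using sqc_int by auto
  have int: "integrable M (\<lambda>w. B0 w * B0 w)" unfolding eq using it by auto
  have "expectation (\<lambda>w. B0 w * B0 w) = (\<Sum>p\<in>I. \<Sum>p'\<in>I. (c p * c p') * expectation (\<lambda>w. (sq p w - tau) * (sq p' w - tau)))"
    unfolding eq using it sqc_int
    by (simp add: Bochner_Integration.integral_sum Bochner_Integration.integrable_sum)
  also have "\<dots> = (\<Sum>p\<in>I. (c p * c p) * expectation (\<lambda>w. (sq p w - tau) * (sq p w - tau)))"
  proof (intro sum.cong refl)
    fix p assume p: "p \<in> I"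
    have "(\<Sum>p'\<in>I. (c p * c p') * expectation (\<lambda>w. (sq p w - tau) * (sq p' w - tau)))
      = (\<Sum>p'\<in>I. if p' = p then (c p * c p') * expectation (\<lambda>w. (sq p w - tau) * (sq p' w - tau)) else 0)"
      by (intro sum.cong refl) (use p sqsq_exp(1) in auto)
    also have "\<dots> = (c p * c p) * expectation (\<lambda>w. (sq p w - tau) * (sq p w - tau))"
      using p by (simp add: sum.delta)
    finally show "(\<Sum>p'\<in>I. (c p * c p') * expectation (\<lambda>w. (sq p w - tau) * (sq p' w - tau)))
      = (c p * c p) * expectation (\<lambda>w. (sq p w - tau) * (sq p w - tau))" .
  qed
  also have "\<dots> \<le> (\<Sum>p\<in>I. (c p * c p) * (2 * tau^2))"
    by (intro sum_mono mult_left_mono sqc2_exp) auto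
  also have "\<dots> = 2 * tau^2 * (\<Sum>p\<in>I. (c p)^2)"
    by (simp add: sum_distrib_left power2_eq_square mult_ac)
  finally show ?thesis using int by simp
qed

lemma C0_sq: "integrable M (\<lambda>w. C0 w * C0 w) \<and> expectation (\<lambda>w. C0 w * C0 w) \<le> tau^2 * real (card Pairs)"
proof -
  have eq: "(\<lambda>w. C0 w * C0 w) = (\<lambda>w. \<Sum>t\<in>Pairs. \<Sum>t'\<in>Pairs. GG t w * GG t' w)"
    unfolding C0_def sum_product by simp
  have int: "integrable M (\<lambda>w. C0 w * C0 w)" unfolding eq using GGGG_int by auto
  have "expectation (\<lambda>w. C0 w * C0 w) = (\<Sum>t\<in>Pairs. \<Sum>t'\<in>Pairs. expectation (\<lambda>w. GG t w * GG t' w))"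
    unfolding eq using GGGG_int
    by (simp add: Bochner_Integration.integral_sum Bochner_Integration.integrable_sum)
  also have "\<dots> = (\<Sum>t\<in>Pairs. expectation (\<lambda>w. GG t w * GG t w))"
  proof (intro sum.cong refl)
    fix t assume t: "t \<in> Pairs"
    have "(\<Sum>t'\<in>Pairs. expectation (\<lambda>w. GG t w * GG t' w))
      = (\<Sum>t'\<in>Pairs. if t' = t then expectation (\<lambda>w. GG t w * GG t' w) else 0)"
      by (intro sum.cong refl) (use t GGGG_exp in auto)
    also have "\<dots> = expectation (\<lambda>w. GG t w * GG t w)"
      using t by (simp add: sum.delta)
    finally show "(\<Sum>t'\<in>Pairs. expectation (\<lambda>w. GG t w * GG t' w)) = expectation (\<lambda>w. GG t w * GG t w)" .
  qed
  also have "\<dots> \<le> (\<Sum>t\<in>Pairs. tau^2)"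
  proof (intro sum_mono)
    fix t assume t: "t \<in> Pairs"
    show "expectation (\<lambda>w. GG t w * GG t w) \<le> tau^2"
      unfolding GG_def using GG2_exp Pairs_mem[OF t] by auto
  qed
  also have "\<dots> = tau^2 * real (card Pairs)" by simp
  finally show ?thesis using int by simp
qed

lemma c_bound: "p \<in> I \<Longrightarrow> (c p)^2 \<le> D"
proof -
  assume p: "p \<in> I"
  then have i: "fst p < a" unfolding I_def by auto
  have "(c p)^2 \<le> real (n (fst p) - 1) * real (n (fst p))"
    unfolding c_def power2_eq_square using n_ge2[OF i] by (intro mult_left_mono) auto
  also have "\<dots> \<le> D" unfolding D_def
    by (rule member_le_sum[of "fst p" "{..<a}" "\<lambda>i. real (n i - 1) * real (n i)"]) (use i in auto)
  finally show ?thesis .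
qed

lemma sum_c2: "(\<Sum>p\<in>I. (c p)^2) \<le> D * sqrt D"
proof -
  have "(\<Sum>p\<in>I. (c p)^2) \<le> (\<Sum>p\<in>I. c p * sqrt D)"
  proof (intro sum_mono)
    fix p assume p: "p \<in> I"
    have "c p \<le> sqrt D" using c_bound[OF p] by (rule real_le_rsqrt)
    then show "(c p)^2 \<le> c p * sqrt D" unfolding power2_eq_square using c_nonneg[of p] by (intro mult_left_mono) auto
  qed
  also have "\<dots> = D * sqrt D" unfolding sum_distrib_right[symmetric] sum_c ..
  finally show ?thesis .
qed

lemma card_Pairs: "real (card Pairs) \<le> D"
proof -
  have "card Pairs = (\<Sum>i<a. \<Sum>l2<n i. l2)" unfolding Pairs_def by simp
  also have "\<dots> \<le> (\<Sum>i<a. n i * (n i - 1))"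
  proof (intro sum_mono)
    fix i
    show "(\<Sum>l2<n i. l2) \<le> n i * (n i - 1)"
      using sum_bounded_above[of "{..<n i}" "\<lambda>l2. l2" "n i - 1"] by auto
  qed
  finally have "real (card Pairs) \<le> real (\<Sum>i<a. n i * (n i - 1))" by (simp only: of_nat_le_iff)
  also have "\<dots> = D" unfolding D_def by (simp add: mult.commute)
  finally show ?thesis .
qed


lemma sq_diff_le: "((x::real) - y)^2 \<le> 2 * x^2 + 2 * y^2"
proof -
  have "0 \<le> (x + y)^2" by simp
  then show ?thesis by (simp add: power2_eq_square algebra_simps)
qed

lemma tail:
  assumes a1: "a \<ge> 1" and e: "e > 0"
  shows "measure M {w \<in> space M. \<bar>A1 w / tau - 1\<bar> > e} \<le> (4 / sqrt D + 8 / D) / e^2"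
proof -
  have D1: "D \<ge> 1" using D_ge_N N_pos[OF a1] by linarith
  then have Dp: "D > 0" by simp
  have tp: "tau > 0" by (rule tau_pos)
  define u where "u w = (2 / D^2) * (B0 w * B0 w) + (8 / D^2) * (C0 w * C0 w)" for w
  have iB: "integrable M (\<lambda>w. B0 w * B0 w)" using B0_sq by simp
  have iC: "integrable M (\<lambda>w. C0 w * C0 w)" using C0_sq by simp
  have iu: "integrable M u" unfolding u_def[abs_def] using iB iC by auto
  have "expectation u = (2 / D^2) * expectation (\<lambda>w. B0 w * B0 w) + (8 / D^2) * expectation (\<lambda>w. C0 w * C0 w)"
    unfolding u_def[abs_def] using iB iC by (simp add: Bochner_Integration.integral_add)
  also have "\<dots> \<le> (2 / D^2) * (2 * tau^2 * (D * sqrt D)) + (8 / D^2) * (tau^2 * D)"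
  proof (intro add_mono mult_left_mono)
    show "expectation (\<lambda>w. B0 w * B0 w) \<le> 2 * tau^2 * (D * sqrt D)"
      using B0_sq sum_c2 by (meson mult_left_mono order_trans zero_le_mult_iff zero_le_numeral zero_le_power2)
    show "expectation (\<lambda>w. C0 w * C0 w) \<le> tau^2 * D"
      using C0_sq card_Pairs by (meson mult_left_mono order_trans zero_le_power2)
  qed auto
  also have "\<dots> = tau^2 * (4 / sqrt D + 8 / D)"
  proof -
    have "sqrt D * sqrt D = D" using Dp by simp
    then show ?thesis using Dp by (simp add: field_simps power2_eq_square)
  qed
  finally have Eu: "expectation u \<le> tau^2 * (4 / sqrt D + 8 / D)" .
  have sub: "{w \<in> space M. \<bar>A1 w / tau - 1\<bar> > e} \<subseteq> {w \<in> space M. u w \<ge> e^2 * tau^2}"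
  proof safe
    fix w assume w: "w \<in> space M" "\<bar>A1 w / tau - 1\<bar> > e"
    have "A1 w / tau - 1 = (A1 w - tau) / tau" using tp by (simp add: field_simps)
    then have "\<bar>A1 w - tau\<bar> > e * tau" using w(2) tp by (simp add: abs_div pos_less_divide_eq)
    then have "(e * tau)^2 \<le> (A1 w - tau)^2"
      using e tp by (metis abs_ge_zero abs_of_pos less_imp_le mult_pos_pos power2_abs power_mono)
    also have "\<dots> = (B0 w / D - 2 * C0 w / D)^2" using A1_dec[OF Dp] by simp
    also have "\<dots> \<le> 2 * (B0 w / D)^2 + 2 * (2 * C0 w / D)^2" by (rule sq_diff_le)
    also have "\<dots> = u w" unfolding u_def by (simp add: power2_eq_square field_simps)
    finally show "e^2 * tau^2 \<le> u w" by (simp add: power_mult_distrib)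
  qed
  have um[measurable]: "u \<in> borel_measurable M" using iu by (rule borel_measurable_integrable)
  have "measure M {w \<in> space M. \<bar>A1 w / tau - 1\<bar> > e} \<le> measure M {w \<in> space M. u w \<ge> e^2 * tau^2}"
    by (rule finite_measure_mono[OF sub]) measurable
  also have "\<dots> \<le> expectation u / (e^2 * tau^2)"
  proof (rule integral_Markov_inequality_measure[OF iu])
    show "space M \<in> sets M" by simp
    show "AE x in M. 0 \<le> u x" unfolding u_def using Dp by (auto intro!: add_nonneg_nonneg)
    show "0 < e^2 * tau^2" using e tp by simp
  qed
  also have "\<dots> \<le> tau^2 * (4 / sqrt D + 8 / D) / (e^2 * tau^2)"
    using Eu e tp by (intro divide_right_mono) auto
  also have "\<dots> = (4 / sqrt D + 8 / D) / e^2"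
  proof -
    have "tau^2 \<noteq> 0" using tp by simp
    then show ?thesis by (simp add: mult.commute[of "e^2"])
  qed
  finally show ?thesis .
qed


end

lemma per_nu:
  assumes model: "model M a d n X mu S" and a1: "a \<ge> 1" and n2: "\<And>i. i < a \<Longrightarrow> n i \<ge> 2"
    and T: "sym_idempotent_nonzero d T"
  shows "prob_space.expectation M (estA1 a d n T X) = trace_prod d T S"
    and "\<And>e. e > 0 \<Longrightarrow> measure M {w \<in> space M. \<bar>estA1 a d n T X w / trace_prod d T S - 1\<bar> > e}
           \<le> (4 / sqrt (real (\<Sum>i<a. n i)) + 8 / real (\<Sum>i<a. n i)) / e^2"
proof -
  have ps: "prob_space M" using model unfolding model_def by auto
  interpret setting M a d n X mu S T
    by (rule setting.intro[OF ps]) (unfold_locales, use model n2 T in auto)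
  have eq: "estA1 a d n T X = A1" using estA1_eq by (rule ext)
  show "expectation (estA1 a d n T X) = trace_prod d T S"
    unfolding eq tau_def[symmetric] using A1_int_exp[OF a1] by simp
  fix e :: real assume e: "e > 0"
  have "measure M {w \<in> space M. \<bar>estA1 a d n T X w / trace_prod d T S - 1\<bar> > e} \<le> (4 / sqrt D + 8 / D) / e^2"
    unfolding eq tau_def[symmetric] by (rule tail[OF a1 e])
  also have "\<dots> \<le> (4 / sqrt (real (\<Sum>i<a. n i)) + 8 / real (\<Sum>i<a. n i)) / e^2"
  proof -
    have N1: "real (\<Sum>i<a. n i) \<ge> 1" by (rule N_pos[OF a1])
    have ND: "real (\<Sum>i<a. n i) \<le> D" by (rule D_ge_N)
    have "4 / sqrt D \<le> 4 / sqrt (real (\<Sum>i<a. n i))"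
      using N1 ND by (intro divide_left_mono real_sqrt_le_mono) auto
    moreover have "8 / D \<le> 8 / real (\<Sum>i<a. n i)"
      using N1 ND by (intro divide_left_mono) auto
    ultimately show ?thesis using e by (intro divide_right_mono) auto
  qed
  finally show "measure M {w \<in> space M. \<bar>estA1 a d n T X w / trace_prod d T S - 1\<bar> > e}
           \<le> (4 / sqrt (real (\<Sum>i<a. n i)) + 8 / real (\<Sum>i<a. n i)) / e^2" .
qed

theorem mainTheorem2:
  fixes M :: "nat \<Rightarrow> 'w measure"
    and a d :: "nat \<Rightarrow> nat"
    and n :: "nat \<Rightarrow> nat \<Rightarrow> nat"
    and X :: "nat \<Rightarrow> nat \<Rightarrow> nat \<Rightarrow> nat \<Rightarrow> 'w \<Rightarrow> real"
    and mu :: "nat \<Rightarrow> nat \<Rightarrow> nat \<Rightarrow> real"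
    and S T :: "nat \<Rightarrow> nat \<Rightarrow> nat \<Rightarrow> real"
  assumes model: "\<And>\<nu>. model (M \<nu>) (a \<nu>) (d \<nu>) (n \<nu>) (X \<nu>) (mu \<nu>) (S \<nu>)"
    and a_pos: "\<And>\<nu>. a \<nu> \<ge> 1"
    and n_ge2: "\<And>\<nu> i. i < a \<nu> \<Longrightarrow> n \<nu> i \<ge> 2"
    and T: "\<And>\<nu>. sym_idempotent_nonzero (d \<nu>) (T \<nu>)"
  shows "(\<forall>\<nu>. prob_space.expectation (M \<nu>) (estA1 (a \<nu>) (d \<nu>) (n \<nu>) (T \<nu>) (X \<nu>))
                = trace_prod (d \<nu>) (T \<nu>) (S \<nu>))
     \<and> (asymptotic_framework a d n \<longrightarrow>
          conv_in_prob M (\<lambda>\<nu> w. estA1 (a \<nu>) (d \<nu>) (n \<nu>) (T \<nu>) (X \<nu>) w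
                                 / trace_prod (d \<nu>) (T \<nu>) (S \<nu>)) 1)"
proof (intro conjI allI impI)
  fix \<nu>
  show "prob_space.expectation (M \<nu>) (estA1 (a \<nu>) (d \<nu>) (n \<nu>) (T \<nu>) (X \<nu>)) = trace_prod (d \<nu>) (T \<nu>) (S \<nu>)"
    by (rule per_nu(1)[OF model a_pos n_ge2 T])
next
  assume af: "asymptotic_framework a d n"
  define N where "N \<nu> = real (\<Sum>i<a \<nu>. n \<nu> i)" for \<nu>
  have "filterlim (\<lambda>\<nu>. \<Sum>i<a \<nu>. n \<nu> i) at_top sequentially"
    using af unfolding asymptotic_framework_def tends_inf_def Let_def by auto
  then have NL: "filterlim N at_top sequentially"
    unfolding N_def[abs_def] by (rule filterlim_compose[OF filterlim_real_sequentially])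
  have sL: "filterlim (\<lambda>\<nu>. sqrt (N \<nu>)) at_top sequentially"
    by (rule filterlim_compose[OF sqrt_at_top NL])
  show "conv_in_prob M (\<lambda>\<nu> w. estA1 (a \<nu>) (d \<nu>) (n \<nu>) (T \<nu>) (X \<nu>) w / trace_prod (d \<nu>) (T \<nu>) (S \<nu>)) 1"
    unfolding conv_in_prob_def
  proof (intro allI impI)
    fix e :: real assume e: "e > 0"
    have g0: "(\<lambda>\<nu>. (4 / sqrt (N \<nu>) + 8 / N \<nu>) / e^2) \<longlonglongrightarrow> 0"
    proof -
      have "(\<lambda>\<nu>. 4 / sqrt (N \<nu>)) \<longlonglongrightarrow> 0"
        by (rule tendsto_divide_0[OF tendsto_const filterlim_at_top_imp_at_infinity[OF sL]])
      moreover have "(\<lambda>\<nu>. 8 / N \<nu>) \<longlonglongrightarrow> 0"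
        by (rule tendsto_divide_0[OF tendsto_const filterlim_at_top_imp_at_infinity[OF NL]])
      ultimately have "(\<lambda>\<nu>. 4 / sqrt (N \<nu>) + 8 / N \<nu>) \<longlonglongrightarrow> 0 + 0" by (rule tendsto_add)
      then have "(\<lambda>\<nu>. (4 / sqrt (N \<nu>) + 8 / N \<nu>) / e^2) \<longlonglongrightarrow> (0 + 0) / e^2" using e by (intro tendsto_divide tendsto_const) auto
      then show ?thesis by simp
    qed
    show "(\<lambda>\<nu>. measure (M \<nu>) {w \<in> space (M \<nu>). \<bar>estA1 (a \<nu>) (d \<nu>) (n \<nu>) (T \<nu>) (X \<nu>) w / trace_prod (d \<nu>) (T \<nu>) (S \<nu>) - 1\<bar> > e}) \<longlonglongrightarrow> 0"
    proof (rule tendsto_sandwich[OF _ _ tendsto_const g0])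
      show "\<forall>\<^sub>F \<nu> in sequentially. 0 \<le> measure (M \<nu>) {w \<in> space (M \<nu>). \<bar>estA1 (a \<nu>) (d \<nu>) (n \<nu>) (T \<nu>) (X \<nu>) w / trace_prod (d \<nu>) (T \<nu>) (S \<nu>) - 1\<bar> > e}"
        by simp
      show "\<forall>\<^sub>F \<nu> in sequentially. measure (M \<nu>) {w \<in> space (M \<nu>). \<bar>estA1 (a \<nu>) (d \<nu>) (n \<nu>) (T \<nu>) (X \<nu>) w / trace_prod (d \<nu>) (T \<nu>) (S \<nu>) - 1\<bar> > e}
          \<le> (4 / sqrt (N \<nu>) + 8 / N \<nu>) / e^2"
        unfolding N_def using per_nu(2)[OF model a_pos n_ge2 T e] by simp
    qed
  qed
qed

end
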